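(* Let $G=(V,R,E)$ be a finite bipartite version–record graph, let $\mathbb{T}=(V,\mathbb{E})$ be a version tree on $V$ satisfying the standing assumptions below, and let $\delta>0$. Let $e^*=(v_i,v_j)\in\mathbb{E}$ be an edge with $w(v_i,v_j)\le\delta|R|$ (an edge that LyreSplit may split). Removing $e^*$ splits $\mathbb{T}$ into two subtrees with version sets $V_1,V_2$; let $R_1=\bigcup_{v\in V_1}R(v)$ and $R_2=\bigcup_{v\in V_2}R(v)$. Then the storage cost after splitting satisfies $\mathcal{S}=|R_1|+|R_2|\le(1+\delta)|R|$.
   Context: $(v,r)\in E$ means version $v$ contains record $r$; $R(v)=\{r:(v,r)\in E\}$ and $R=\bigcup_{v\in V}R(v)$. The version tree $\mathbb{T}$ is a rooted tree on $V$ whose edges go from parent to child version, with weight $w(v_i,v_j)=|R(v_i)\cap R(v_j)|$. Standing assumption (no cross-version diff rule): for every record $r$, the set of versions containing $r$ is a connected subtree of $\mathbb{T}$. The storage cost of a partitioning of $V$ into blocks is the sum over blocks of the number of distinct records contained in versions of that block. *)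

theory Defs
  imports Complex_Main
begin

definition recs :: "('v \<times> 'r) set \<Rightarrow> 'v \<Rightarrow> 'r set" where
  "recs E v = {r. (v, r) \<in> E}"

definition all_recs :: "'v set \<Rightarrow> ('v \<times> 'r) set \<Rightarrow> 'r set" where
  "all_recs V E = (\<Union>v\<in>V. recs E v)"

definition weight :: "('v \<times> 'r) set \<Rightarrow> 'v \<Rightarrow> 'v \<Rightarrow> nat" where
  "weight E vi vj = card (recs E vi \<inter> recs E vj)"

definition rooted_tree :: "'v set \<Rightarrow> ('v \<times> 'v) set \<Rightarrow> 'v \<Rightarrow> bool" where
  "rooted_tree V T rt \<longleftrightarrow>
     T \<subseteq> V \<times> V \<and> rt \<in> V \<and>
     (\<forall>u. (u, rt) \<notin> T) \<and>
     (\<forall>v\<in>V. v \<noteq> rt \<longrightarrow> (\<exists>!u. (u, v) \<in> T)) \<and>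
     (\<forall>v\<in>V. (rt, v) \<in> T\<^sup>*)"

definition undir_on :: "('v \<times> 'v) set \<Rightarrow> 'v set \<Rightarrow> ('v \<times> 'v) set" where
  "undir_on T S = {(x, y). x \<in> S \<and> y \<in> S \<and> ((x, y) \<in> T \<or> (y, x) \<in> T)}"

definition connected_in :: "('v \<times> 'v) set \<Rightarrow> 'v set \<Rightarrow> bool" where
  "connected_in T S \<longleftrightarrow> (\<forall>x\<in>S. \<forall>y\<in>S. (x, y) \<in> (undir_on T S)\<^sup>*)"

definition versions_of :: "'v set \<Rightarrow> ('v \<times> 'r) set \<Rightarrow> 'r \<Rightarrow> 'v set" where
  "versions_of V E r = {v\<in>V. (v, r) \<in> E}"

definition comp_after_removal :: "'v set \<Rightarrow> ('v \<times> 'v) set \<Rightarrow> ('v \<times> 'v) \<Rightarrow> 'v \<Rightarrow> 'v set" where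
  "comp_after_removal V T e x = {v\<in>V. (x, v) \<in> (undir_on (T - {e}) V)\<^sup>*}"

end

theory Submission
  imports Defs
begin

lemma no_cycle:
  assumes tree: "rooted_tree V T rt" and v: "(rt, v) \<in> T\<^sup>*"
  shows "(v, v) \<notin> T\<^sup>+"
  using v
proof (induction rule: rtrancl_induct)
  case base
  then show ?case using tree unfolding rooted_tree_def
    by (metis tranclE)
next
  case (step y z)
  show ?case
  proof
    assume "(z, z) \<in> T\<^sup>+"
    then obtain w where zw: "(z, w) \<in> T\<^sup>*" and wz: "(w, z) \<in> T"
      by (meson tranclD2)
    have zV: "z \<in> V" "z \<noteq> rt" using step(2) tree unfolding rooted_tree_def by auto
    then have "w = y" using wz step(2) tree unfolding rooted_tree_def by metis
    then have "(y, y) \<in> T\<^sup>+" using zw step(2)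
      by (meson rtrancl_into_trancl2)
    with step(3) show False by simp
  qed
qed

lemma cross:
  assumes "(u, w) \<in> R\<^sup>*" "u \<notin> D" "w \<in> D"
  shows "\<exists>x y. (x, y) \<in> R \<and> x \<notin> D \<and> y \<in> D"
  using assms by (induction rule: rtrancl_induct) auto

lemma closed_pres:
  assumes "(u, w) \<in> R\<^sup>*" "\<And>x y. (x, y) \<in> R \<Longrightarrow> (x \<in> D \<longleftrightarrow> y \<in> D)"
  shows "u \<in> D \<longleftrightarrow> w \<in> D"
  using assms by (induction rule: rtrancl_induct) auto

theorem lemma2:
  fixes V :: "'v set" and E :: "('v \<times> 'r) set" and T :: "('v \<times> 'v) set"
    and rt :: 'v and \<delta> :: real and vi vj :: 'v
  assumes finV: "finite V" and finE: "finite E" and EV: "fst ` E \<subseteq> V"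
    and tree: "rooted_tree V T rt"
    and subtree: "\<forall>r. connected_in T (versions_of V E r)"
    and delta: "\<delta> > 0"
    and edge: "(vi, vj) \<in> T"
    and wsmall: "real (weight E vi vj) \<le> \<delta> * real (card (all_recs V E))"
  shows "real (card (\<Union>v\<in>comp_after_removal V T (vi, vj) vi. recs E v)
              + card (\<Union>v\<in>comp_after_removal V T (vi, vj) vj. recs E v))
         \<le> (1 + \<delta>) * real (card (all_recs V E))"
proof -
  define D where "D = {v. (vj, v) \<in> T\<^sup>*}"
  define C1 where "C1 = comp_after_removal V T (vi, vj) vi"
  define C2 where "C2 = comp_after_removal V T (vi, vj) vj"
  define R1 where "R1 = (\<Union>v\<in>C1. recs E v)"
  define R2 where "R2 = (\<Union>v\<in>C2. recs E v)"
  have TV: "T \<subseteq> V \<times> V" and rtV: "rt \<in> V" and noin: "\<forall>u. (u, rt) \<notin> T"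
    and par: "\<forall>v\<in>V. v \<noteq> rt \<longrightarrow> (\<exists>!u. (u, v) \<in> T)"
    and reach: "\<forall>v\<in>V. (rt, v) \<in> T\<^sup>*"
    using tree unfolding rooted_tree_def by auto
  have viV: "vi \<in> V" and vjV: "vj \<in> V" using edge TV by auto
  have vjD: "vj \<in> D" unfolding D_def by simp
  have viD: "vi \<notin> D"
  proof
    assume "vi \<in> D"
    then have "(vj, vi) \<in> T\<^sup>*" unfolding D_def by simp
    then have "(vi, vi) \<in> T\<^sup>+" using edge by (meson rtrancl_into_trancl2)
    with no_cycle[OF tree] reach viV show False by blast
  qed
  have closed: "x \<in> D \<longleftrightarrow> y \<in> D" if xy: "(x, y) \<in> undir_on (T - {(vi, vj)}) V" for x y
  proof -
    have key: "a \<in> D \<longleftrightarrow> b \<in> D" if ab: "(a, b) \<in> T" "(a, b) \<noteq> (vi, vj)" for a b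
    proof
      assume "a \<in> D" then show "b \<in> D" using ab unfolding D_def by simp
    next
      assume bD: "b \<in> D"
      have bV: "b \<in> V" "b \<noteq> rt" using ab TV noin by auto
      show "a \<in> D"
      proof (cases "b = vj")
        case True
        then have "a = vi" using par bV ab edge by metis
        with True ab show ?thesis by simp
      next
        case False
        with bD have "(vj, b) \<in> T\<^sup>+" unfolding D_def by (simp add: rtrancl_eq_or_trancl)
        then obtain z where "(vj, z) \<in> T\<^sup>*" "(z, b) \<in> T" by (meson tranclD2)
        moreover have "a = z" using par bV ab calculation(2) by metis
        ultimately show ?thesis unfolding D_def by simp
      qed
    qed
    from xy show ?thesis unfolding undir_on_def using key by auto
  qed
  have C1D: "v \<notin> D" if "v \<in> C1" for v
    using that closed_pres[of vi v "undir_on (T - {(vi, vj)}) V" D] closed viD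
    unfolding C1_def comp_after_removal_def by auto
  have C2D: "v \<in> D" if "v \<in> C2" for v
    using that closed_pres[of vj v "undir_on (T - {(vi, vj)}) V" D] closed vjD
    unfolding C2_def comp_after_removal_def by auto
  have C1V: "C1 \<subseteq> V" and C2V: "C2 \<subseteq> V"
    unfolding C1_def C2_def comp_after_removal_def by auto
  have Int: "R1 \<inter> R2 \<subseteq> recs E vi \<inter> recs E vj"
  proof
    fix r assume "r \<in> R1 \<inter> R2"
    then obtain u w where u: "u \<in> C1" "r \<in> recs E u" and w: "w \<in> C2" "r \<in> recs E w"
      unfolding R1_def R2_def by auto
    define S where "S = versions_of V E r"
    have "u \<in> S" "w \<in> S" using u w C1V C2V unfolding S_def versions_of_def recs_def by auto
    then have "(u, w) \<in> (undir_on T S)\<^sup>*" using subtree unfolding S_def connected_in_def by blast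
    then obtain x y where xy: "(x, y) \<in> undir_on T S" "x \<notin> D" "y \<in> D"
      using cross C1D[OF u(1)] C2D[OF w(1)] by metis
    have SV: "S \<subseteq> V" unfolding S_def versions_of_def by auto
    have "\<not> (x, y) \<in> undir_on (T - {(vi, vj)}) V" using closed xy(2,3) by blast
    then have "{x, y} = {vi, vj}" "x \<in> S" "y \<in> S"
      using xy(1) SV unfolding undir_on_def by auto
    then have "vi \<in> S" "vj \<in> S" by (auto simp: doubleton_eq_iff)
    then show "r \<in> recs E vi \<inter> recs E vj"
      unfolding S_def versions_of_def recs_def by auto
  qed
  have finR: "finite (all_recs V E)"
  proof -
    have "all_recs V E \<subseteq> snd ` E" unfolding all_recs_def recs_def by force
    then show ?thesis using finE finite_subset by blast
  qed
  have sub1: "R1 \<subseteq> all_recs V E" and sub2: "R2 \<subseteq> all_recs V E"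
    using C1V C2V unfolding R1_def R2_def all_recs_def by auto
  have fin1: "finite R1" and fin2: "finite R2" using sub1 sub2 finR finite_subset by auto
  have "card R1 + card R2 = card (R1 \<union> R2) + card (R1 \<inter> R2)"
    using card_Un_Int[OF fin1 fin2] .
  also have "card (R1 \<union> R2) \<le> card (all_recs V E)"
    using sub1 sub2 finR by (intro card_mono) auto
  also have "card (R1 \<inter> R2) \<le> weight E vi vj"
  proof -
    have "finite (recs E vi \<inter> recs E vj)"
      using fin1 finR viV unfolding all_recs_def
      by (meson UN_I finite_Int finite_subset subsetI)
    then show ?thesis unfolding weight_def using Int card_mono by blast
  qed
  finally have "card R1 + card R2 \<le> card (all_recs V E) + weight E vi vj" by simp
  then have "real (card R1 + card R2) \<le> real (card (all_recs V E)) + real (weight E vi vj)"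
    by linarith
  with wsmall show ?thesis unfolding R1_def R2_def C1_def C2_def by (simp add: algebra_simps)
qed

end
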